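(* Let $m\ge 2$, $\boldsymbol{\mu}\in\mathbb{R}^m$, and let $\boldsymbol{\Sigma}\in\mathbb{R}^{m\times m}$ be symmetric positive definite with symmetric positive definite square root $\boldsymbol{\Sigma}^{1/2}$. Let $\mathcal{R}$ be a non-negative scalar random variable with probability density $p_{\mathcal{R}}$ on $(0,\infty)$, and let $\boldsymbol{\mathcal{V}}\sim vMF(\boldsymbol{\mu}_v,\tau)$ be independent of $\mathcal{R}$, with density $p_{\boldsymbol{\mathcal{V}}}$. Define $\boldsymbol{\mathcal{X}}=\boldsymbol{\mu}+\mathcal{R}\,\boldsymbol{\Sigma}^{1/2}\boldsymbol{\mathcal{V}}$. Then $\boldsymbol{\mathcal{X}}$ has a probability density (with respect to Lebesgue measure on $\mathbb{R}^m$) given, for $\mathbf{x}\neq\boldsymbol{\mu}$, by $$p_{\boldsymbol{\mathcal{X}}}(\mathbf{x})=\det(\boldsymbol{\Sigma})^{-1/2}\cdot p_{\boldsymbol{\mathcal{V}}}\!\Big(\frac{\boldsymbol{\Sigma}^{-1/2}(\mathbf{x}-\boldsymbol{\mu})}{\sqrt{t}}\Big)\cdot g(t),$$ where $t=(\mathbf{x}-\boldsymbol{\mu})^T\boldsymbol{\Sigma}^{-1}(\mathbf{x}-\boldsymbol{\mu})$ and $g(t)=t^{-\frac{m-1}{2}}\,p_{\mathcal{R}}(\sqrt{t})$.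
   Context: The von Mises–Fisher distribution $vMF(\boldsymbol{\mu}_v,\tau)$ on the unit sphere $\mathbb{S}^{m-1}=\{\mathbf{x}\in\mathbb{R}^m:\mathbf{x}^T\mathbf{x}=1\}$, with mean direction $\boldsymbol{\mu}_v\in\mathbb{S}^{m-1}$ and concentration $\tau>0$, has density with respect to the surface measure on $\mathbb{S}^{m-1}$ given by $p_{\boldsymbol{\mathcal{V}}}(\mathbf{v})=C_m(\tau)\exp(\tau\boldsymbol{\mu}_v^T\mathbf{v})$, where $C_m(\tau)=\tau^{m/2-1}/\big((2\pi)^{m/2}I_{m/2-1}(\tau)\big)$ and $I_a$ is the modified Bessel function of the first kind. The random vector $\boldsymbol{\mathcal{X}}$ is called a vMF elliptical distribution. *)

theory Defs
  imports "HOL-Probability.Probability"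
begin

definition bessel_I :: "real \<Rightarrow> real \<Rightarrow> real" where
  "bessel_I a x = (\<Sum>k. (x / 2) powr (2 * real k + a) / (fact k * Gamma (real k + a + 1)))"

text \<open>Surface (Hausdorff) measure on the unit sphere of real^'m, defined as the
  cone measure: sigma(A) = m * Lebesgue volume of {r v | 0 < r <= 1, v in A on the sphere}.\<close>
definition sphere_surface :: "(real ^ 'm) measure" where
  "sphere_surface = measure_of UNIV (sets borel)
     (\<lambda>A. of_nat CARD('m) * emeasure lborel
        {r *\<^sub>R v | r v. 0 < r \<and> r \<le> 1 \<and> v \<in> A \<and> v \<in> sphere 0 1})"

definition vMF_const :: "nat \<Rightarrow> real \<Rightarrow> real" where
  "vMF_const m \<tau> = \<tau> powr (real m / 2 - 1) /
     ((2 * pi) powr (real m / 2) * bessel_I (real m / 2 - 1) \<tau>)"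

definition vMF_density :: "real ^ 'm \<Rightarrow> real \<Rightarrow> real ^ 'm \<Rightarrow> real" where
  "vMF_density \<mu>v \<tau> v =
     (if v \<in> sphere 0 1 then vMF_const CARD('m) \<tau> * exp (\<tau> * (\<mu>v \<bullet> v)) else 0)"

definition sym_pos_def :: "real ^ 'm ^ 'm \<Rightarrow> bool" where
  "sym_pos_def A \<longleftrightarrow> transpose A = A \<and> (\<forall>x. x \<noteq> 0 \<longrightarrow> x \<bullet> (A *v x) > 0)"

end

theory Submission
  imports Defs "HOL-Analysis.Analysis"
begin


lemma det_shear_gen:
  fixes m n :: "'n::finite"
  assumes "m \<noteq> n"
  shows "det (matrix (\<lambda>v::real^'n. \<chi> i. if i = m then v $ m + v $ n else v $ i)) = 1"
proof -
  have "matrix (\<lambda>v::real^'n. \<chi> i. if i = m then v $ m + v $ n else v $ i)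
      = (\<chi> k. if k = m then row m (mat 1) + 1 *s row n (mat 1) else row k (mat 1 :: real^'n^'n))"
    by (auto simp: matrix_def vec_eq_iff row_def mat_def axis_def)
  then show ?thesis using det_row_operation[OF assms, of "mat 1" 1] by (simp add: det_I)
qed

proposition
 fixes f :: "real^'n::finite \<Rightarrow> real^'n::_"
  assumes "linear f" "S \<in> lmeasurable"
  shows measurable_linear_image_gen: "(f ` S) \<in> lmeasurable"
    and measure_linear_image_gen: "measure lebesgue (f ` S) = \<bar>det (matrix f)\<bar> * measure lebesgue S" (is "?Q f S")
proof -
  have "\<forall>S \<in> lmeasurable. (f ` S) \<in> lmeasurable \<and> ?Q f S"
  proof (rule induct_linear_elementary [OF \<open>linear f\<close>]; intro ballI)
    fix f g and S :: "(real,'n) vec set"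
    assume "linear f" and "linear g"
      and f [rule_format]: "\<forall>S \<in> lmeasurable. f ` S \<in> lmeasurable \<and> ?Q f S"
      and g [rule_format]: "\<forall>S \<in> lmeasurable. g ` S \<in> lmeasurable \<and> ?Q g S"
      and S: "S \<in> lmeasurable"
    then have gS: "g ` S \<in> lmeasurable"
      by blast
    show "(f \<circ> g) ` S \<in> lmeasurable \<and> ?Q (f \<circ> g) S"
      using f [OF gS] g [OF S] matrix_compose [OF \<open>linear g\<close> \<open>linear f\<close>]
      by (simp add: o_def image_comp abs_mult det_mul)
  next
    fix f :: "real^'n::_ \<Rightarrow> real^'n::_" and i and S :: "(real^'n::_) set"
    assume "linear f" and 0: "\<And>x. f x $ i = 0" and "S \<in> lmeasurable"
    then have "\<not> inj f"
      by (metis (full_types) linear_injective_imp_surjective one_neq_zero surjE vec_component)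
    have detf: "det (matrix f) = 0"
      using \<open>\<not> inj f\<close> det_nz_iff_inj[OF \<open>linear f\<close>] by blast
    show "f ` S \<in> lmeasurable \<and> ?Q f S"
    proof
      show "f ` S \<in> lmeasurable"
        using lmeasurable_iff_indicator_has_integral \<open>linear f\<close> \<open>\<not> inj f\<close> negligible_UNIV negligible_linear_singular_image by blast
      have "measure lebesgue (f ` S) = 0"
        by (meson \<open>\<not> inj f\<close> \<open>linear f\<close> negligible_imp_measure0 negligible_linear_singular_image)
      also have "\<dots> = \<bar>det (matrix f)\<bar> * measure lebesgue S"
        by (simp add: detf)
      finally show "?Q f S" .
    qed
  next
    fix c and S :: "(real^'n::_) set"
    assume "S \<in> lmeasurable"
    show "(\<lambda>a. \<chi> i. c i * a $ i) ` S \<in> lmeasurable \<and> ?Q (\<lambda>a. \<chi> i. c i * a $ i) S"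
    proof
      show "(\<lambda>a. \<chi> i. c i * a $ i) ` S \<in> lmeasurable"
        by (simp add: \<open>S \<in> lmeasurable\<close> measurable_stretch)
      show "?Q (\<lambda>a. \<chi> i. c i * a $ i) S"
        by (simp add: measure_stretch [OF \<open>S \<in> lmeasurable\<close>, of c] axis_def matrix_def det_diagonal)
    qed
  next
    fix m :: "'n" and n :: "'n" and S :: "(real, 'n) vec set"
    assume "m \<noteq> n" and "S \<in> lmeasurable"
    let ?h = "\<lambda>v::(real, 'n) vec. \<chi> i. v $ Transposition.transpose m n i"
    have lin: "linear ?h"
      by (rule linearI) (simp_all add: plus_vec_def scaleR_vec_def)
    have meq: "measure lebesgue ((\<lambda>v::(real, 'n) vec. \<chi> i. v $ Transposition.transpose m n i) ` cbox a b)
             = measure lebesgue (cbox a b)" for a b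
    proof (cases "cbox a b = {}")
      case True then show ?thesis
        by simp
    next
      case False
      then have him: "?h ` (cbox a b) \<noteq> {}"
        by blast
      have eq: "?h ` (cbox a b) = cbox (?h a) (?h b)"
        by (auto simp: image_iff lambda_swap_Galois mem_box_cart) (metis transpose_involutory)+
      show ?thesis
        using him prod.permute [OF permutes_swap_id, where S=UNIV and g="\<lambda>i. (b - a)$i", symmetric]
        by (simp add: eq content_cbox_cart False)
    qed
    have "(\<chi> i j. if Transposition.transpose m n i = j then 1 else 0) = (\<chi> i j. if j = Transposition.transpose m n i then 1 else (0::real))"
      by (auto intro!: Cart_lambda_cong)
    then have "matrix ?h = transpose(\<chi> i j. mat 1 $ i $ Transposition.transpose m n j)"
      by (auto simp: matrix_eq transpose_def axis_def mat_def matrix_def)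
    then have 1: "\<bar>det (matrix ?h)\<bar> = 1"
      by (simp add: det_permute_columns permutes_swap_id sign_swap_id abs_mult)
    show "?h ` S \<in> lmeasurable \<and> ?Q ?h S"
      using measure_linear_sufficient [OF lin \<open>S \<in> lmeasurable\<close>] meq 1 by force
  next
    fix m n :: "'n" and S :: "(real, 'n) vec set"
    assume "m \<noteq> n" and "S \<in> lmeasurable"
    let ?h = "\<lambda>v::(real, 'n) vec. \<chi> i. if i = m then v $ m + v $ n else v $ i"
    have lin: "linear ?h"
      by (rule linearI) (auto simp: algebra_simps plus_vec_def scaleR_vec_def vec_eq_iff)
    have 1: "det(matrix ?h) = 1"
      using det_shear_gen[OF \<open>m \<noteq> n\<close>] by simp
    have meq: "measure lebesgue (?h ` (cbox a b)) = measure lebesgue (cbox a b)" for a b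
    proof (cases "cbox a b = {}")
      case True then show ?thesis by simp
    next
      case False
      then have ne: "(+) (\<chi> i. if i = n then - a $ n else 0) ` cbox a b \<noteq> {}"
        by auto
      let ?v = "\<chi> i. if i = n then - a $ n else 0"
      have "?h ` cbox a b
            = (+) (\<chi> i. if i = m \<or> i = n then a $ n else 0) ` ?h ` (+) ?v ` (cbox a b)"
        using \<open>m \<noteq> n\<close> unfolding image_comp o_def by (force simp: vec_eq_iff)
      then have "measure lebesgue (?h ` (cbox a b))
               = measure lebesgue ((\<lambda>v. \<chi> i. if i = m then v $ m + v $ n else v $ i) `
                                   (+) ?v ` cbox a b)"
        by (rule ssubst) (rule measure_translation)
      also have "\<dots> = measure lebesgue ((\<lambda>v. \<chi> i. if i = m then v $ m + v $ n else v $ i) ` cbox (?v +a) (?v + b))"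
        by (metis (no_types, lifting) cbox_translation)
      also have "\<dots> = measure lebesgue ((+) ?v ` cbox a b)"
        apply (subst measure_shear_interval)
        using \<open>m \<noteq> n\<close> ne apply auto
        apply (simp add: cbox_translation)
        by (metis cbox_borel cbox_translation measure_completion sets_lborel)
      also have "\<dots> = measure lebesgue (cbox a b)"
        by (rule measure_translation)
        finally show ?thesis .
      qed
    show "?h ` S \<in> lmeasurable \<and> ?Q ?h S"
      using measure_linear_sufficient [OF lin \<open>S \<in> lmeasurable\<close>] meq 1 by force
  qed
  with assms show "(f ` S) \<in> lmeasurable" "?Q f S"
    by metis+
qed


lemma matrix_inv_props:
  fixes A :: "real^'n^'n"
  assumes "invertible A"
  shows "A ** matrix_inv A = mat 1" "matrix_inv A ** A = mat 1"
proof -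
  have "\<exists>A'. A ** A' = mat 1 \<and> A' ** A = mat 1" using assms by (simp add: invertible_def)
  then have "A ** matrix_inv A = mat 1 \<and> matrix_inv A ** A = mat 1"
    unfolding matrix_inv_def by (rule someI_ex)
  then show "A ** matrix_inv A = mat 1" "matrix_inv A ** A = mat 1" by auto
qed

lemma det_matrix_inv:
  fixes A :: "real^'n^'n"
  assumes "invertible A"
  shows "det (matrix_inv A) * det A = 1"
  using matrix_inv_props(2)[OF assms] det_mul[of "matrix_inv A" A] by (simp add: det_I)

lemma lborel_affine_matrix:
  fixes S :: "real^'n^'n" and \<mu> :: "real^'n"
  assumes inv: "invertible S"
  shows "lborel = density (distr lborel borel (\<lambda>y. \<mu> + S *v y)) (\<lambda>_. ennreal \<bar>det S\<bar>)"
proof (rule lborel_eqI)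
  let ?T = "\<lambda>y. \<mu> + S *v y"
  let ?Si = "matrix_inv S"
  have [measurable]: "?T \<in> borel \<rightarrow>\<^sub>M borel"
    by (intro borel_measurable_continuous_onI continuous_intros) 
  fix l u :: "real^'n" assume le: "\<And>b. b \<in> Basis \<Longrightarrow> l \<bullet> b \<le> u \<bullet> b"
  have pre: "?T -` box l u = (\<lambda>x. ?Si *v x) ` ((\<lambda>x. x - \<mu>) ` box l u)"
  proof -
    have "?T -` box l u = {y. \<mu> + S *v y \<in> box l u}" by auto
    also have "\<dots> = (\<lambda>x. ?Si *v x) ` ((\<lambda>x. x - \<mu>) ` box l u)"
    proof (safe)
      fix y assume "\<mu> + S *v y \<in> box l u"
      then show "y \<in> (\<lambda>x. ?Si *v x) ` ((\<lambda>x. x - \<mu>) ` box l u)"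
        by (intro image_eqI[where x="S *v y"] image_eqI[where x="\<mu> + S *v y"])
           (simp_all add: matrix_vector_mul_assoc matrix_inv_props[OF inv])
    next
      fix x assume "x \<in> box l u"
      then show "\<mu> + S *v (?Si *v (x - \<mu>)) \<in> box l u"
        by (simp add: matrix_vector_mul_assoc matrix_inv_props[OF inv])
    qed
    finally show ?thesis .
  qed
  have lm: "(\<lambda>x. x - \<mu>) ` box l u \<in> lmeasurable"
    by (intro measurable_translation_subtract lmeasurable_box)
  have "measure lebesgue (?T -` box l u) = \<bar>det ?Si\<bar> * measure lebesgue (box l u)"
    unfolding pre
    using measure_linear_image_gen[OF matrix_vector_mul_linear lm, of ?Si]
    by (simp add: matrix_of_matrix_vector_mul measure_translation_subtract)
  moreover have lmT: "?T -` box l u \<in> lmeasurable"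
    unfolding pre by (intro measurable_linear_image_gen matrix_vector_mul_linear lm)
  moreover have bT: "?T -` box l u \<in> sets borel"
    using measurable_sets[of ?T borel borel "box l u"] by simp
  ultimately have e: "emeasure lborel (?T -` box l u) = ennreal (\<bar>det ?Si\<bar> * measure lebesgue (box l u))"
  proof -
    have "emeasure lborel (?T -` box l u) = emeasure lebesgue (?T -` box l u)"
      using bT by (simp add: emeasure_completion main_part)
    also have "\<dots> = ennreal (measure lebesgue (?T -` box l u))"
      using lmT by (rule emeasure_eq_measure2)
    finally show ?thesis
      by (simp add: \<open>measure lebesgue (?T -` box l u) = \<bar>det ?Si\<bar> * measure lebesgue (box l u)\<close>)
  qed
  have d: "\<bar>det S\<bar> * \<bar>det ?Si\<bar> = 1"
    using det_matrix_inv[OF inv] by (simp add: abs_mult[symmetric] mult.commute)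
  have "emeasure (density (distr lborel borel ?T) (\<lambda>_. ennreal \<bar>det S\<bar>)) (box l u)
      = ennreal \<bar>det S\<bar> * emeasure lborel (?T -` box l u)"
    by (simp add: emeasure_density emeasure_distr nn_integral_cmult_indicator)
  also have "\<dots> = ennreal (\<bar>det S\<bar> * \<bar>det ?Si\<bar> * measure lebesgue (box l u))"
    unfolding e by (simp add: ennreal_mult'[symmetric] mult.assoc)
  also have "\<dots> = ennreal (measure lborel (box l u))"
    by (simp add: d measure_completion)
  also have "\<dots> = emeasure lborel (box l u)"
    by (simp add: emeasure_eq_measure2)
  also have "\<dots> = (\<Prod>b\<in>Basis. (u - l) \<bullet> b)"
    using le by (simp add: emeasure_lborel_box_eq prod_nonneg inner_diff_left)
  finally show "emeasure (density (distr lborel borel ?T) (\<lambda>_. ennreal \<bar>det S\<bar>)) (box l u) = (\<Prod>b\<in>Basis. (u - l) \<bullet> b)" .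
qed simp

lemma affine_nn_integral:
  fixes S :: "real^'n^'n" and \<mu> :: "real^'n" and g :: "real^'n \<Rightarrow> ennreal"
  assumes inv: "invertible S" and g[measurable]: "g \<in> borel_measurable borel"
  shows "(\<integral>\<^sup>+x. g x \<partial>lborel) = (\<integral>\<^sup>+y. ennreal \<bar>det S\<bar> * g (\<mu> + S *v y) \<partial>lborel)"
proof -
  let ?T = "\<lambda>y. \<mu> + S *v y"
  have Tm[measurable]: "?T \<in> borel \<rightarrow>\<^sub>M borel"
    by (intro borel_measurable_continuous_onI continuous_intros)
  have Tm': "?T \<in> lborel \<rightarrow>\<^sub>M borel" using Tm by (simp add: measurable_lborel1)
  have e: "density (distr lborel borel ?T) (\<lambda>_. ennreal \<bar>det S\<bar>) = lborel"
    by (rule lborel_affine_matrix[OF inv, symmetric])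
  have "(\<integral>\<^sup>+x. g x \<partial>lborel) = (\<integral>\<^sup>+x. g x \<partial>density (distr lborel borel ?T) (\<lambda>_. ennreal \<bar>det S\<bar>))"
    by (simp only: e)
  also have "\<dots> = (\<integral>\<^sup>+x. ennreal \<bar>det S\<bar> * g x \<partial>distr lborel borel ?T)"
    by (rule nn_integral_density) simp_all
  also have "\<dots> = (\<integral>\<^sup>+y. ennreal \<bar>det S\<bar> * g (?T y) \<partial>lborel)"
    by (rule nn_integral_distr[OF Tm']) simp
  finally show ?thesis .
qed

lemma matrix_inv_unique:
  fixes A B :: "real^'n^'n"
  assumes "A ** B = mat 1" "B ** A = mat 1"
  shows "matrix_inv A = B"
proof -
  have inv: "invertible A" using assms by (auto simp: invertible_def)
  have "matrix_inv A = matrix_inv A ** (A ** B)" using assms by simp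
  also have "\<dots> = (matrix_inv A ** A) ** B" by (simp add: matrix_mul_assoc)
  also have "\<dots> = B" using matrix_inv_props(2)[OF inv] by simp
  finally show ?thesis .
qed



definition cone1 :: "(real^'m) set \<Rightarrow> (real^'m) set" where
  "cone1 A = {y. y \<noteq> 0 \<and> norm y \<le> 1 \<and> sgn y \<in> A \<inter> sphere 0 1}"

lemma cone1_eq: fixes A :: "(real^'m) set" shows "{(r::real) *\<^sub>R v | r v. 0 < r \<and> r \<le> 1 \<and> v \<in> A \<and> v \<in> sphere 0 1} = cone1 A"
proof safe
  fix r :: real and v :: "real^'m" assume "0 < r" "r \<le> 1" "v \<in> A" "v \<in> sphere 0 1"
  then show "r *\<^sub>R v \<in> cone1 A" by (auto simp: cone1_def sgn_scaleR sgn_div_norm)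
next
  fix y :: "real^'m" assume "y \<in> cone1 A"
  then show "\<exists>r v. y = r *\<^sub>R v \<and> 0 < r \<and> r \<le> 1 \<and> v \<in> A \<and> v \<in> sphere 0 1"
    by (intro exI[of _ "norm y"] exI[of _ "sgn y"]) (auto simp: cone1_def sgn_div_norm norm_sgn)
qed

lemma cone1_sets[measurable]: "A \<in> sets borel \<Longrightarrow> cone1 (A::(real^'m) set) \<in> sets borel"
proof -
  assume [measurable]: "A \<in> sets borel"
  have [measurable]: "sphere (0::real^'m) 1 \<in> sets borel" by (simp add: borel_closed)
  have "Measurable.pred borel (\<lambda>y::real^'m. y \<noteq> 0 \<and> norm y \<le> 1 \<and> sgn y \<in> A \<inter> sphere 0 1)"
    by measurable
  then show ?thesis by (simp add: cone1_def pred_def)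
qed

lemma cone1_subset: "cone1 A \<subseteq> cball 0 1"
  by (auto simp: cone1_def)

lemma cone1_finite: "emeasure lborel (cone1 (A::(real^'m) set)) < \<infinity>"
proof -
  have "emeasure lborel (cone1 A) \<le> emeasure lborel (cball (0::real^'m) 1)"
    by (rule emeasure_mono[OF cone1_subset]) simp
  also have "\<dots> < \<infinity>" by (rule emeasure_lborel_cball_finite)
  finally show ?thesis .
qed

lemma cone1_finite'[simp]: "emeasure lborel (cone1 (A::(real^'m) set)) \<noteq> \<top>"
  using cone1_finite[of A] by (simp add: less_top)

lemma sets_sphere_surface[simp, measurable_cong]: "sets (sphere_surface :: (real^'m) measure) = sets borel"
  unfolding sphere_surface_def using sets.sigma_sets_eq[of "borel :: (real^'m) measure"] by (simp add: sets_measure_of_conv)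

lemma space_sphere_surface[simp]: "space (sphere_surface :: (real^'m) measure) = UNIV"
  unfolding sphere_surface_def by (simp add: space_measure_of_conv)

lemma emeasure_sphere_surface:
  assumes "A \<in> sets borel"
  shows "emeasure (sphere_surface :: (real^'m) measure) A = of_nat CARD('m) * emeasure lborel (cone1 A)"
proof -
  let ?f = "\<lambda>A::(real^'m) set. of_nat CARD('m) * emeasure lborel (cone1 A)"
  have "emeasure (measure_of UNIV (sets borel) ?f) A = ?f A"
  proof (rule emeasure_measure_of_sigma)
    show "sigma_algebra UNIV (sets (borel :: (real^'m) measure))"
      using sets.sigma_algebra_axioms[of "borel :: (real^'m) measure"] by simp
    show "positive (sets borel) ?f" by (simp add: positive_def cone1_def)
    show "countably_additive (sets borel) ?f"
    proof (unfold countably_additive_def, intro allI impI)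
      fix F :: "nat \<Rightarrow> (real^'m) set"
      assume F: "range F \<subseteq> sets borel" "disjoint_family F"
      have u: "cone1 (\<Union>(range F)) = (\<Union>i. cone1 (F i))" by (auto simp: cone1_def)
      have d: "disjoint_family (\<lambda>i. cone1 (F i))"
        using F(2) by (auto simp: disjoint_family_on_def cone1_def)
      have r: "range (\<lambda>i. cone1 (F i)) \<subseteq> sets lborel" using F(1) by auto
      show "(\<Sum>i. ?f (F i)) = ?f (\<Union>(range F))"
        unfolding ennreal_suminf_cmult u suminf_emeasure[OF r d] by simp
    qed
    show "A \<in> sets borel" by fact
  qed
  moreover have "{(r::real) *\<^sub>R v | r v. 0 < r \<and> r \<le> 1 \<and> v \<in> B \<and> v \<in> sphere 0 1} = cone1 B" for B :: "(real^'m) set"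
    by (rule cone1_eq)
  ultimately show ?thesis unfolding sphere_surface_def by simp
qed

lemma finite_sphere_surface: "finite_measure (sphere_surface :: (real^'m) measure)"
proof (rule finite_measureI)
  show "emeasure sphere_surface (space sphere_surface) \<noteq> \<infinity>"
    by (simp add: emeasure_sphere_surface ennreal_mult_eq_top_iff)
qed

lemma AE_sphere_surface: "AE v in (sphere_surface :: (real^'m) measure). v \<in> sphere 0 1"
proof (rule AE_I')
  have "cone1 (- sphere (0::real^'m) 1) = {}" by (auto simp: cone1_def)
  moreover have "- sphere (0::real^'m) 1 \<in> sets borel" by (simp add: borel_closed borel_comp)
  ultimately show "- sphere (0::real^'m) 1 \<in> null_sets sphere_surface"
    by (simp add: null_sets_def emeasure_sphere_surface)
qed auto



definition rad_density :: "nat \<Rightarrow> real \<Rightarrow> ennreal" where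
  "rad_density n r = ennreal (indicator {0<..} r * r ^ (n - 1))"

lemma rad_density_measurable[measurable]: "rad_density n \<in> borel_measurable borel"
  unfolding rad_density_def by measurable

lemma sigma_finite_rad: "sigma_finite_measure (density lborel (rad_density n))"
  by (subst sigma_finite_measure.sigma_finite_iff_density_finite)
     (auto simp: rad_density_def lborel.sigma_finite_measure_axioms)

definition Yset :: "(real^'m) set \<Rightarrow> real \<Rightarrow> (real^'m) set" where
  "Yset B c = {y. y \<noteq> 0 \<and> norm y \<le> c \<and> sgn y \<in> B}"

lemma Yset_sets[measurable]: "B \<in> sets borel \<Longrightarrow> Yset (B::(real^'m) set) c \<in> sets borel"
proof -
  assume [measurable]: "B \<in> sets borel"
  have "Measurable.pred borel (\<lambda>y::real^'m. y \<noteq> 0 \<and> norm y \<le> c \<and> sgn y \<in> B)"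
    by measurable
  then show ?thesis by (simp add: Yset_def pred_def)
qed

lemma Yset_measure:
  fixes B :: "(real^'m) set"
  assumes B: "B \<in> sets borel" and c: "c \<ge> 0"
  shows "emeasure lborel (Yset B c) = ennreal (c ^ CARD('m) * measure lborel (cone1 B))"
proof (cases "c = 0")
  case True
  then have "Yset B c = {}" by (auto simp: Yset_def)
  then show ?thesis using True by simp
next
  case False
  then have cpos: "c > 0" using c by simp
  have pre: "(\<lambda>x::real^'m. 0 + c *\<^sub>R x) -` Yset B c = cone1 B"
    using cpos by (auto simp: Yset_def cone1_def sgn_scaleR norm_sgn)
  have "emeasure lborel (Yset B c) =
      emeasure (density (distr lborel borel (\<lambda>x::real^'m. 0 + c *\<^sub>R x)) (\<lambda>x. ennreal (\<bar>c\<bar> ^ DIM(real^'m)))) (Yset B c)"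
    using lborel_affine[of c "0::real^'m"] False by simp
  also have "\<dots> = ennreal (c ^ CARD('m)) * emeasure lborel (cone1 B)"
    using B cpos
    by (simp add: emeasure_density emeasure_distr nn_integral_cmult_indicator pre[simplified] DIM_cart)
  also have "\<dots> = ennreal (c ^ CARD('m) * measure lborel (cone1 B))"
    by (simp add: emeasure_eq_ennreal_measure ennreal_mult'' ennreal_mult)
  finally show ?thesis .
qed

lemma rad_Ioc:
  fixes a b :: real
  assumes n: "n \<ge> 1"
  shows "emeasure (density lborel (rad_density n)) {a<..b} =
     ennreal ((max b (max a 0) ^ n - max a 0 ^ n) / n)"
proof -
  define a' where "a' = max a 0"
  define b' where "b' = max b (max a 0)"
  have ab: "a' \<le> b'" "0 \<le> a'" by (auto simp: a'_def b'_def)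
  have "emeasure (density lborel (rad_density n)) {a<..b} = (\<integral>\<^sup>+ r. rad_density n r * indicator {a<..b} r \<partial>lborel)"
    by (simp add: emeasure_density)
  also have "\<dots> = (\<integral>\<^sup>+ r. ennreal (r ^ (n - 1)) * indicator {a'<..b'} r \<partial>lborel)"
    by (rule nn_integral_cong) (auto simp: rad_density_def indicator_def a'_def b'_def)
  also have "\<dots> = (\<integral>\<^sup>+ r. ennreal (r ^ (n - 1)) * indicator {a'..b'} r \<partial>lborel)"
  proof (rule nn_integral_cong_AE)
    show "AE r in lborel. ennreal (r ^ (n - 1)) * indicator {a'<..b'} r = ennreal (r ^ (n - 1)) * indicator {a'..b'} r"
      using AE_lborel_singleton[of a'] by eventually_elim (auto simp: indicator_def)
  qed
  also have "\<dots> = ennreal (b' ^ n / n - a' ^ n / n)"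
  proof (rule nn_integral_FTC_Icc)
    show "(\<lambda>r::real. r ^ (n - 1)) \<in> borel_measurable borel" by measurable
    fix x :: real assume x: "x \<in> {a'..b'}"
    show "((\<lambda>r. r ^ n / n) has_real_derivative x ^ (n - 1)) (at x)"
      using n by (auto intro!: derivative_eq_intros)
    show "0 \<le> x ^ (n - 1)" using x ab by simp
  qed (use ab in auto)
  finally show ?thesis by (simp add: a'_def b'_def diff_divide_distrib)
qed

lemma shell_measure:
  fixes B :: "(real^'m) set"
  assumes B: "B \<in> sets borel"
  shows "emeasure lborel {y::real^'m. norm y \<in> {a<..b} \<and> sgn y \<in> B} =
    emeasure (density lborel (rad_density CARD('m))) {a<..b} * emeasure sphere_surface B"
proof -
  define a' where "a' = max a 0"
  define b' where "b' = max b (max a 0)"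
  define m where "m = CARD('m)"
  define \<kappa> where "\<kappa> = measure lborel (cone1 B)"
  have m1: "m \<ge> 1" by (simp add: m_def Suc_le_eq)
  have ab: "a' \<le> b'" "0 \<le> a'" by (auto simp: a'_def b'_def)
  have k0: "\<kappa> \<ge> 0" by (simp add: \<kappa>_def)
  let ?X = "{y::real^'m. norm y \<in> {a<..b} \<and> sgn y \<in> B}"
  have Xs: "?X \<in> sets borel"
  proof -
    have "Measurable.pred borel (\<lambda>y::real^'m. norm y \<in> {a<..b} \<and> sgn y \<in> B)"
      using B by measurable
    then show ?thesis by (simp add: pred_def)
  qed
  have sub1: "Yset B b' - Yset B a' \<subseteq> ?X"
    by (auto simp: Yset_def a'_def b'_def)
  have sub2: "?X \<subseteq> (Yset B b' - Yset B a') \<union> {0}"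
  proof
    fix x assume x: "x \<in> ?X"
    show "x \<in> (Yset B b' - Yset B a') \<union> {0}"
    proof (cases "x = 0")
      case False
      then have "norm x > 0" by simp
      with x have "norm x > max a 0" by auto
      then have "x \<notin> Yset B a'" unfolding Yset_def a'_def by (metis (mono_tags) mem_Collect_eq not_le)
      moreover have "x \<in> Yset B b'" using x False by (auto simp: Yset_def b'_def)
      ultimately show ?thesis by simp
    qed simp
  qed
  have sub3: "Yset B a' \<subseteq> Yset B b'" using ab by (auto simp: Yset_def)
  have "emeasure lborel ?X \<le> emeasure lborel ((Yset B b' - Yset B a') \<union> {0})"
    by (rule emeasure_mono[OF sub2]) (use B in simp)
  also have "\<dots> = emeasure lborel (Yset B b' - Yset B a')"
    by (rule emeasure_Un_null_set) (use B in auto)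
  finally have le: "emeasure lborel ?X \<le> emeasure lborel (Yset B b' - Yset B a')" .
  have ge: "emeasure lborel (Yset B b' - Yset B a') \<le> emeasure lborel ?X"
    by (rule emeasure_mono[OF sub1]) (use Xs in simp)
  have "emeasure lborel ?X = emeasure lborel (Yset B b' - Yset B a')"
    using le ge by (rule antisym)
  also have "\<dots> = emeasure lborel (Yset B b') - emeasure lborel (Yset B a')"
    by (rule emeasure_Diff) (use B sub3 ab in \<open>auto simp: Yset_measure\<close>)
  also have "\<dots> = ennreal (b' ^ m * \<kappa>) - ennreal (a' ^ m * \<kappa>)"
    using ab B by (simp add: Yset_measure m_def \<kappa>_def)
  also have "\<dots> = ennreal ((b' ^ m - a' ^ m) * \<kappa>)"
    using ab k0 by (simp add: ennreal_minus left_diff_distrib)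
  finally have L: "emeasure lborel ?X = ennreal ((b' ^ m - a' ^ m) * \<kappa>)" .
  have pw: "a' ^ m \<le> b' ^ m" using ab by (simp add: power_mono)
  have "emeasure (density lborel (rad_density CARD('m))) {a<..b} * emeasure sphere_surface B
      = ennreal ((b' ^ m - a' ^ m) / m) * (of_nat m * ennreal \<kappa>)"
  proof -
    have r: "emeasure (density lborel (rad_density CARD('m))) {a<..b} = ennreal ((b' ^ m - a' ^ m) / m)"
      using rad_Ioc[of "CARD('m)" a b] m1 by (simp add: a'_def b'_def m_def)
    have s: "emeasure sphere_surface B = of_nat m * ennreal \<kappa>"
      using B emeasure_eq_ennreal_measure[of lborel "cone1 B"]
      by (simp add: emeasure_sphere_surface m_def \<kappa>_def)
    show ?thesis unfolding r s ..
  qed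
  also have "\<dots> = ennreal ((b' ^ m - a' ^ m) / m * m * \<kappa>)"
  proof -
    have x0: "(b' ^ m - a' ^ m) / m \<ge> 0" using pw by simp
    have "ennreal ((b' ^ m - a' ^ m) / m) * (of_nat m * ennreal \<kappa>)
        = (ennreal ((b' ^ m - a' ^ m) / m) * ennreal (real m)) * ennreal \<kappa>"
      by (simp add: ennreal_of_nat_eq_real_of_nat mult.assoc)
    also have "\<dots> = ennreal ((b' ^ m - a' ^ m) / m * m) * ennreal \<kappa>"
      using ennreal_mult'[OF x0, of "real m"] by simp
    also have "\<dots> = ennreal ((b' ^ m - a' ^ m) / m * m * \<kappa>)"
      by (rule ennreal_mult'[symmetric]) (rule mult_nonneg_nonneg[OF x0]; simp)
    finally show ?thesis .
  qed
  also have "\<dots> = ennreal ((b' ^ m - a' ^ m) * \<kappa>)"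
    using m1 by simp
  finally show ?thesis using L by simp
qed

lemma sigma_finite_sphere: "sigma_finite_measure (sphere_surface :: (real^'m) measure)"
  by (rule finite_measure.sigma_finite_measure[OF finite_sphere_surface])

lemma radial_measure:
  fixes B :: "(real^'m) set" and A :: "real set"
  assumes B[measurable]: "B \<in> sets borel" and A[measurable]: "A \<in> sets borel"
  shows "emeasure lborel {y::real^'m. norm y \<in> A \<and> sgn y \<in> B} =
    emeasure (density lborel (rad_density CARD('m))) A * emeasure sphere_surface B"
proof -
  define C where "C = {y::real^'m. sgn y \<in> B}"
  have C[measurable]: "C \<in> sets borel"
  proof -
    have "Measurable.pred borel (\<lambda>y::real^'m. sgn y \<in> B)" by measurable
    then show ?thesis by (simp add: pred_def C_def)
  qed
  define M1 where "M1 = distr (density lborel (indicator C)) borel (norm :: real^'m \<Rightarrow> real)"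
  define M2 where "M2 = density (density lborel (rad_density CARD('m))) (\<lambda>_. emeasure sphere_surface B)"
  have e1: "emeasure M1 X = emeasure lborel {y::real^'m. norm y \<in> X \<and> sgn y \<in> B}" if X: "X \<in> sets borel" for X
  proof -
    have "emeasure M1 X = emeasure (density lborel (indicator C)) (norm -` X \<inter> space (density lborel (indicator C)))"
      unfolding M1_def by (rule emeasure_distr) (use X in auto)
    also have "\<dots> = emeasure lborel (C \<inter> (norm -` X))"
    proof -
      have "norm -` X \<in> sets (borel :: (real^'m) measure)"
        using measurable_sets[of norm borel borel X] X by simp
      then show ?thesis by (simp add: emeasure_restricted)
    qed
    also have "C \<inter> (norm -` X) = {y::real^'m. norm y \<in> X \<and> sgn y \<in> B}" by (auto simp: C_def)
    finally show ?thesis .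
  qed
  have e2: "emeasure M2 X = emeasure (density lborel (rad_density CARD('m))) X * emeasure sphere_surface B"
    if X: "X \<in> sets borel" for X
  proof -
    have "emeasure M2 X = (\<integral>\<^sup>+x\<in>X. emeasure sphere_surface B \<partial>density lborel (rad_density CARD('m)))"
      unfolding M2_def by (rule emeasure_density) (use X in auto)
    also have "\<dots> = emeasure sphere_surface B * emeasure (density lborel (rad_density CARD('m))) X"
      by (rule nn_integral_cmult_indicator) (use X in simp)
    finally show ?thesis by (simp add: mult.commute)
  qed
  have Ioc_sets: "{a<..b::real} \<in> sets borel" for a b by simp
  have "M1 = M2"
  proof (rule measure_eqI_generator_eq[where \<Omega>=UNIV and E="range (\<lambda>(a, b). {a<..b::real})"
        and A="\<lambda>i. {- real i<..real i}"])
    show "Int_stable (range (\<lambda>(a, b). {a<..b::real}))"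
    proof (rule Int_stableI_image)
      fix i j :: "real \<times> real"
      show "\<exists>k\<in>UNIV. (case i of (a, b) \<Rightarrow> {a<..b}) \<inter> (case j of (a, b) \<Rightarrow> {a<..b}) = (case k of (a, b) \<Rightarrow> {a<..b})"
        by (cases i; cases j) (auto intro!: bexI[of _ "(max (fst i) (fst j), min (snd i) (snd j))"])
    qed
    show "range (\<lambda>(a, b). {a<..b::real}) \<subseteq> Pow UNIV" by simp
    fix X assume "X \<in> range (\<lambda>(a, b). {a<..b::real})"
    then obtain a b where X: "X = {a<..b}" by auto
    show "emeasure M1 X = emeasure M2 X"
      unfolding X e1[OF Ioc_sets] e2[OF Ioc_sets]
      by (rule shell_measure[OF B])
  next
    show "sets M1 = sigma_sets UNIV (range (\<lambda>(a, b). {a<..b::real}))"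
      unfolding M1_def by (simp add: borel_sigma_sets_Ioc)
    show "sets M2 = sigma_sets UNIV (range (\<lambda>(a, b). {a<..b::real}))"
      unfolding M2_def by (simp add: borel_sigma_sets_Ioc)
    show "range (\<lambda>i. {- real i<..real i}) \<subseteq> range (\<lambda>(a, b). {a<..b::real})" by auto
    show "(\<Union>i. {- real i<..real i}) = UNIV" by (rule UN_Ioc_eq_UNIV)
    fix i :: nat
    have "emeasure M1 {- real i<..real i} \<le> emeasure lborel (cball (0::real^'m) (real i))"
      unfolding e1[OF Ioc_sets] by (rule emeasure_mono) auto
    also have "\<dots> < \<infinity>" by (rule emeasure_lborel_cball_finite)
    finally show "emeasure M1 {- real i<..real i} \<noteq> \<infinity>" by simp
  qed
  then show ?thesis using e1[OF A] e2[OF A] by simp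
qed


lemma polar_pair:
  "distr lborel (borel \<Otimes>\<^sub>M sphere_surface) (\<lambda>y::real^'m. (norm y, sgn y)) =
   density lborel (rad_density CARD('m)) \<Otimes>\<^sub>M (sphere_surface :: (real^'m) measure)"
proof (rule pair_measure_eqI[symmetric])
  have meas: "(\<lambda>y::real^'m. (norm y, sgn y)) \<in> borel \<rightarrow>\<^sub>M borel \<Otimes>\<^sub>M sphere_surface"
  proof (rule measurable_Pair)
    show "(\<lambda>y::real^'m. sgn y) \<in> borel \<rightarrow>\<^sub>M sphere_surface"
      by (subst measurable_cong_sets[OF refl sets_sphere_surface]) (rule borel_measurable_sgn)
  qed simp
  show "sigma_finite_measure (density lborel (rad_density CARD('m)))" by (rule sigma_finite_rad)
  show "sigma_finite_measure (sphere_surface :: (real^'m) measure)" by (rule sigma_finite_sphere)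
  show "sets (density lborel (rad_density CARD('m)) \<Otimes>\<^sub>M sphere_surface) =
      sets (distr lborel (borel \<Otimes>\<^sub>M sphere_surface) (\<lambda>y::real^'m. (norm y, sgn y)))"
  proof -
    have "sets (density lborel (rad_density CARD('m)) \<Otimes>\<^sub>M (sphere_surface :: (real^'m) measure)) = sets (borel \<Otimes>\<^sub>M (sphere_surface :: (real^'m) measure))"
      by (rule sets_pair_measure_cong) simp_all
    then show ?thesis by simp
  qed
  fix A B assume A: "A \<in> sets (density lborel (rad_density CARD('m)))" and B: "B \<in> sets (sphere_surface :: (real^'m) measure)"
  then have A': "A \<in> sets borel" and B': "B \<in> sets borel" by auto
  have "emeasure (distr lborel (borel \<Otimes>\<^sub>M sphere_surface) (\<lambda>y::real^'m. (norm y, sgn y))) (A \<times> B)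
      = emeasure lborel ((\<lambda>y::real^'m. (norm y, sgn y)) -` (A \<times> B) \<inter> space lborel)"
  proof (rule emeasure_distr)
    show "(\<lambda>y::real^'m. (norm y, sgn y)) \<in> lborel \<rightarrow>\<^sub>M borel \<Otimes>\<^sub>M sphere_surface"
      using meas by (simp add: measurable_lborel1)
    show "A \<times> B \<in> sets (borel \<Otimes>\<^sub>M sphere_surface)"
      by (rule pair_measureI) (use A' B' in simp_all)
  qed
  also have "(\<lambda>y::real^'m. (norm y, sgn y)) -` (A \<times> B) \<inter> space lborel = {y. norm y \<in> A \<and> sgn y \<in> B}"
    by auto
  finally show "emeasure (density lborel (rad_density CARD('m))) A * emeasure sphere_surface B =
      emeasure (distr lborel (borel \<Otimes>\<^sub>M sphere_surface) (\<lambda>y::real^'m. (norm y, sgn y))) (A \<times> B)"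
    using radial_measure[OF B' A'] by simp
qed

lemma norm_sgn_scale: "norm x *\<^sub>R sgn x = (x::'a::real_normed_vector)"
  by (cases "x = 0") (simp_all add: sgn_div_norm)

lemma polar_nn_integral:
  fixes k :: "real^'m \<Rightarrow> ennreal"
  assumes k[measurable]: "k \<in> borel_measurable borel"
  shows "(\<integral>\<^sup>+y. k y \<partial>lborel) =
    (\<integral>\<^sup>+r. rad_density CARD('m) r * (\<integral>\<^sup>+v. k (r *\<^sub>R v) \<partial>sphere_surface) \<partial>lborel)"
proof -
  let ?\<rho> = "density lborel (rad_density CARD('m))"
  let ?\<sigma> = "sphere_surface :: (real^'m) measure"
  have kb: "(\<lambda>z::real \<times> (real^'m). k (fst z *\<^sub>R snd z)) \<in> borel_measurable (borel \<Otimes>\<^sub>M borel)"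
    by measurable
  have s1: "sets (?\<rho> \<Otimes>\<^sub>M ?\<sigma>) = sets (borel \<Otimes>\<^sub>M borel)"
    by (rule sets_pair_measure_cong) simp_all
  have s2: "sets (lborel \<Otimes>\<^sub>M ?\<sigma>) = sets (borel \<Otimes>\<^sub>M borel)"
    by (rule sets_pair_measure_cong) simp_all
  have s3: "sets (borel \<Otimes>\<^sub>M ?\<sigma>) = sets (borel \<Otimes>\<^sub>M borel)"
    by (rule sets_pair_measure_cong) simp_all
  have km: "(\<lambda>z::real \<times> (real^'m). k (fst z *\<^sub>R snd z)) \<in> borel_measurable (?\<rho> \<Otimes>\<^sub>M ?\<sigma>)"
    by (subst measurable_cong_sets[OF s1 refl]) (rule kb)
  have km2: "(\<lambda>(x, y). k (x *\<^sub>R y)) \<in> borel_measurable (lborel \<Otimes>\<^sub>M ?\<sigma>)"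
    using kb by (subst measurable_cong_sets[OF s2 refl]) (simp add: case_prod_beta')
  have inner: "(\<lambda>r. \<integral>\<^sup>+v. k (r *\<^sub>R v) \<partial>?\<sigma>) \<in> borel_measurable lborel"
    using sigma_finite_measure.borel_measurable_nn_integral[OF sigma_finite_sphere km2] by simp
  have "(\<integral>\<^sup>+r. rad_density CARD('m) r * (\<integral>\<^sup>+v. k (r *\<^sub>R v) \<partial>?\<sigma>) \<partial>lborel)
      = (\<integral>\<^sup>+r. (\<integral>\<^sup>+v. k (r *\<^sub>R v) \<partial>?\<sigma>) \<partial>?\<rho>)"
    by (rule nn_integral_density[symmetric]) (use inner in simp_all)
  also have "\<dots> = (\<integral>\<^sup>+z. k (fst z *\<^sub>R snd z) \<partial>(?\<rho> \<Otimes>\<^sub>M ?\<sigma>))"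
    using sigma_finite_measure.nn_integral_fst[OF sigma_finite_sphere km] by simp
  also have "\<dots> = (\<integral>\<^sup>+z. k (fst z *\<^sub>R snd z) \<partial>distr lborel (borel \<Otimes>\<^sub>M ?\<sigma>) (\<lambda>y::real^'m. (norm y, sgn y)))"
    by (simp add: polar_pair)
  also have "\<dots> = (\<integral>\<^sup>+y. k (norm y *\<^sub>R sgn y) \<partial>lborel)"
  proof -
    have m1: "(\<lambda>y::real^'m. (norm y, sgn y)) \<in> lborel \<rightarrow>\<^sub>M borel \<Otimes>\<^sub>M ?\<sigma>"
    proof (rule measurable_Pair)
      show "(\<lambda>y::real^'m. sgn y) \<in> lborel \<rightarrow>\<^sub>M ?\<sigma>"
        by (subst measurable_cong_sets[OF sets_lborel sets_sphere_surface]) (rule borel_measurable_sgn)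
    qed simp
    have m2: "(\<lambda>z::real \<times> (real^'m). k (fst z *\<^sub>R snd z)) \<in> borel_measurable (borel \<Otimes>\<^sub>M ?\<sigma>)"
      by (subst measurable_cong_sets[OF s3 refl]) (rule kb)
    show ?thesis using m2 by (subst nn_integral_distr[OF m1]) simp_all
  qed
  finally show ?thesis by (simp add: norm_sgn_scale)
qed



lemma spd_invertible:
  fixes S :: "real^'m^'m"
  assumes "sym_pos_def S"
  shows "invertible S"
proof -
  have pos: "\<And>x. x \<noteq> 0 \<Longrightarrow> x \<bullet> (S *v x) > 0" using assms by (simp add: sym_pos_def_def)
  have "inj ((*v) S)"
  proof (rule injI)
    fix x y assume "S *v x = S *v y"
    then have "S *v (x - y) = 0" by (simp add: matrix_vector_mult_diff_distrib)
    then show "x = y" using pos[of "x - y"] by (cases "x - y = 0") auto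
  qed
  then have "det (matrix ((*v) S)) \<noteq> 0"
    using det_nz_iff_inj[OF matrix_vector_mul_linear] by blast
  then show ?thesis by (simp add: invertible_det_nz)
qed

lemma spd_inv_sym:
  fixes S :: "real^'m^'m"
  assumes "sym_pos_def S"
  shows "transpose (matrix_inv S) = matrix_inv S"
proof -
  have tS: "transpose S = S" using assms by (simp add: sym_pos_def_def)
  have inv: "invertible S" by (rule spd_invertible[OF assms])
  have "matrix_inv S = transpose (matrix_inv S)"
  proof (rule matrix_inv_unique)
    show "S ** transpose (matrix_inv S) = mat 1"
      using arg_cong[OF matrix_inv_props(2)[OF inv], of transpose]
      by (simp add: matrix_transpose_mul tS transpose_mat)
    show "transpose (matrix_inv S) ** S = mat 1"
      using arg_cong[OF matrix_inv_props(1)[OF inv], of transpose]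
      by (simp add: matrix_transpose_mul tS transpose_mat)
  qed
  then show ?thesis by simp
qed

lemma quad_form:
  fixes A :: "real^'m^'m"
  assumes "transpose A = A"
  shows "x \<bullet> ((A ** A) *v x) = norm (A *v x) ^ 2"
proof -
  have "x \<bullet> ((A ** A) *v x) = x \<bullet> (A *v (A *v x))" by (simp add: matrix_vector_mul_assoc)
  also have "\<dots> = (x v* A) \<bullet> (A *v x)" by (simp add: dot_lmul_matrix)
  also have "x v* A = A *v x" using transpose_matrix_vector[of A x] assms by simp
  finally show ?thesis by (simp add: power2_norm_eq_inner)
qed

lemma det_powr_half:
  fixes d :: real
  assumes "d \<noteq> 0"
  shows "(d * d) powr (-1/2) = 1 / \<bar>d\<bar>"
proof -
  have a: "d * d = \<bar>d\<bar> powr 2"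
  proof -
    have "\<bar>d\<bar> powr 2 = \<bar>d\<bar> ^ 2" using assms by (simp add: powr_numeral)
    then show ?thesis by (simp add: power2_eq_square)
  qed
  have "(d * d) powr (-1/2) = (\<bar>d\<bar> powr 2) powr (-1/2)" by (simp only: a)
  also have "\<dots> = \<bar>d\<bar> powr (2 * (-1/2))" by (rule powr_powr)
  also have "\<dots> = \<bar>d\<bar> powr (- 1)" by simp
  also have "\<dots> = 1 / \<bar>d\<bar>" using assms by (simp add: powr_minus_divide)
  finally show ?thesis .
qed



theorem mainTheorem1:
  fixes M :: "'a measure"
    and \<mu> \<mu>v :: "real ^ 'm"
    and \<Sigma> S :: "real ^ 'm ^ 'm"
    and \<tau> :: real
    and R :: "'a \<Rightarrow> real" and V :: "'a \<Rightarrow> real ^ 'm"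
    and pR :: "real \<Rightarrow> real"
  assumes "prob_space M"
    and "CARD('m) \<ge> 2"
    and "sym_pos_def \<Sigma>"
    and "sym_pos_def S" and "S ** S = \<Sigma>"
    and "norm \<mu>v = 1" and "\<tau> > 0"
    and "\<forall>r. pR r \<ge> 0"
    and "\<forall>\<omega>\<in>space M. R \<omega> \<ge> 0"
    and "distributed M lborel R (\<lambda>r. ennreal (indicator {0<..} r * pR r))"
    and "distributed M sphere_surface V (\<lambda>v. ennreal (vMF_density \<mu>v \<tau> v))"
    and "\<forall>A\<in>sets (borel :: real measure). \<forall>B\<in>sets (borel :: (real ^ 'm) measure).
           measure M ({\<omega>\<in>space M. R \<omega> \<in> A} \<inter> {\<omega>\<in>space M. V \<omega> \<in> B}) =
           measure M {\<omega>\<in>space M. R \<omega> \<in> A} * measure M {\<omega>\<in>space M. V \<omega> \<in> B}"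
  shows "\<exists>f. distributed M lborel (\<lambda>\<omega>. \<mu> + R \<omega> *\<^sub>R (S *v V \<omega>)) f \<and>
     (\<forall>x. x \<noteq> \<mu> \<longrightarrow>
        (let t = (x - \<mu>) \<bullet> (matrix_inv \<Sigma> *v (x - \<mu>)) in
         f x = ennreal (det \<Sigma> powr (-1/2)
                 * vMF_density \<mu>v \<tau> ((1 / sqrt t) *\<^sub>R (matrix_inv S *v (x - \<mu>)))
                 * (t powr (- (real CARD('m) - 1) / 2) * pR (sqrt t)))))"
proof -
  note assms_all = assms
  interpret P: prob_space M by fact
  have pR0: "\<And>r. pR r \<ge> 0" using assms(8) by simp
  have Sspd: "sym_pos_def S" by fact
  have SS: "S ** S = \<Sigma>" by fact
  have distR: "distributed M lborel R (\<lambda>r. ennreal (indicator {0<..} r * pR r))" by fact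
  have distV: "distributed M sphere_surface V (\<lambda>v. ennreal (vMF_density \<mu>v \<tau> v))" by fact
  have indep: "\<forall>A\<in>sets (borel :: real measure). \<forall>B\<in>sets (borel :: (real ^ 'm) measure).
           measure M ({\<omega>\<in>space M. R \<omega> \<in> A} \<inter> {\<omega>\<in>space M. V \<omega> \<in> B}) =
           measure M {\<omega>\<in>space M. R \<omega> \<in> A} * measure M {\<omega>\<in>space M. V \<omega> \<in> B}" by fact
  define m where "m = CARD('m)"
  have m1: "m \<ge> 1" using assms(2) by (simp add: m_def)
  define Si where "Si = matrix_inv S"
  have invS: "invertible S" by (rule spd_invertible[OF Sspd])
  have SSi: "S ** Si = mat 1" and SiS: "Si ** S = mat 1"
    using matrix_inv_props[OF invS] by (simp_all add: Si_def)
  have trSi: "transpose Si = Si" using spd_inv_sym[OF Sspd] by (simp add: Si_def)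
  have invSig: "matrix_inv \<Sigma> = Si ** Si"
  proof (rule matrix_inv_unique)
    show "\<Sigma> ** (Si ** Si) = mat 1" unfolding SS[symmetric]
      by (simp add: matrix_mul_assoc[symmetric]) (simp add: matrix_mul_assoc SSi)
    show "(Si ** Si) ** \<Sigma> = mat 1" unfolding SS[symmetric]
      by (simp add: matrix_mul_assoc[symmetric]) (simp add: matrix_mul_assoc SiS)
  qed
  have detS: "det S \<noteq> 0" using invS by (simp add: invertible_det_nz)
  have detSig: "det \<Sigma> powr (-1/2) = 1 / \<bar>det S\<bar>"
    unfolding SS[symmetric] det_mul using det_powr_half[OF detS] by simp
  define pR' where "pR' r = indicator {0<..} r * pR r" for r
  have pR'0: "pR' r \<ge> 0" for r using pR0 by (simp add: pR'_def)
  have pR'_meas[measurable]: "pR' \<in> borel_measurable borel"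
  proof -
    have "(\<lambda>r. ennreal (pR' r)) \<in> borel_measurable lborel"
      using distributed_borel_measurable[OF distR] by (simp add: pR'_def)
    then have "(\<lambda>r. enn2real (ennreal (pR' r))) \<in> borel_measurable borel"
      by (simp add: measurable_lborel1)
    then show ?thesis using pR'0 by simp
  qed
  have sph[measurable]: "sphere (0::real^'m) 1 \<in> sets borel" by (simp add: borel_closed)
  have vMF_meas[measurable]: "vMF_density \<mu>v \<tau> \<in> borel_measurable borel"
    unfolding vMF_density_def[abs_def] by measurable
  define t where "t x = (x - \<mu>) \<bullet> (matrix_inv \<Sigma> *v (x - \<mu>))" for x
  have t_eq: "t x = norm (Si *v (x - \<mu>)) ^ 2" for x
    unfolding t_def invSig by (rule quad_form[OF trSi])
  define F where "F x = det \<Sigma> powr (-1/2)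
                 * vMF_density \<mu>v \<tau> ((1 / sqrt (t x)) *\<^sub>R (matrix_inv S *v (x - \<mu>)))
                 * (t x powr (- (real CARD('m) - 1) / 2) * pR (sqrt (t x)))" for x
  define G where "G w = 1 / \<bar>det S\<bar> * vMF_density \<mu>v \<tau> ((1 / norm w) *\<^sub>R w)
                 * ((norm w ^ 2) powr (- (real m - 1) / 2) * pR' (norm w))" for w :: "real^'m"
  have G_meas[measurable]: "G \<in> borel_measurable borel"
    unfolding G_def[abs_def] by measurable
  have Si0: "Si *v w = 0 \<longleftrightarrow> w = 0" for w
  proof
    assume "Si *v w = 0"
    then have "S *v (Si *v w) = 0" by simp
    then show "w = 0" by (simp add: matrix_vector_mul_assoc SSi)
  qed simp
  have F_alt: "F x = G (Si *v (x - \<mu>))" if "x \<noteq> \<mu>" for x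
  proof -
    have "Si *v (x - \<mu>) \<noteq> 0" using that Si0 by simp
    then have np: "norm (Si *v (x - \<mu>)) > 0" by simp
    then show ?thesis
      by (simp add: F_def G_def t_eq detSig[simplified] Si_def[symmetric] m_def pR'_def)
  qed
  have F_meas[measurable]: "F \<in> borel_measurable borel"
  proof -
    have "F = (\<lambda>x. if x \<in> {\<mu>} then F \<mu> else G (Si *v (x - \<mu>)))"
      using F_alt by (auto simp: fun_eq_iff)
    also have "\<dots> \<in> borel_measurable borel"
    proof (rule measurable_If_set)
      have "(\<lambda>x. Si *v x - Si *v \<mu>) \<in> borel_measurable borel"
        by (intro borel_measurable_continuous_onI continuous_intros)
      then have "(\<lambda>x. Si *v (x - \<mu>)) \<in> borel_measurable borel"
        by (simp add: matrix_vector_mult_diff_distrib)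
      then show "(\<lambda>x. G (Si *v (x - \<mu>))) \<in> borel_measurable borel" by measurable
      show "{\<mu>} \<inter> space borel \<in> sets borel" by (simp add: borel_closed)
    qed simp
    finally show ?thesis .
  qed
  define f where "f x = ennreal (F x)" for x
  have f_meas[measurable]: "f \<in> borel_measurable borel" unfolding f_def[abs_def] by measurable
  define X where "X \<omega> = \<mu> + R \<omega> *\<^sub>R (S *v V \<omega>)" for \<omega>
  let ?\<sigma> = "sphere_surface :: (real^'m) measure"
  define pRd where "pRd r = ennreal (pR' r)" for r
  define pVd where "pVd v = ennreal (vMF_density \<mu>v \<tau> v)" for v :: "real^'m"
  have pRd_meas[measurable]: "pRd \<in> borel_measurable borel" unfolding pRd_def[abs_def] by measurable
  have pVd_meas[measurable]: "pVd \<in> borel_measurable borel" unfolding pVd_def[abs_def] by measurable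
  have Rm: "R \<in> M \<rightarrow>\<^sub>M lborel" by (rule distributed_measurable[OF distR])
  have Rmb[measurable]: "R \<in> borel_measurable M" using Rm by (simp add: measurable_lborel2)
  have Vm: "V \<in> M \<rightarrow>\<^sub>M ?\<sigma>" by (rule distributed_measurable[OF distV])
  have Vmb[measurable]: "V \<in> borel_measurable M"
    using Vm by (subst (asm) measurable_cong_sets[OF refl sets_sphere_surface])
  have Smeas[measurable]: "(\<lambda>x. S *v x) \<in> borel_measurable borel"
    by (intro borel_measurable_continuous_onI continuous_intros)
  have Xm: "X \<in> M \<rightarrow>\<^sub>M lborel" unfolding measurable_lborel2 X_def[abs_def] by measurable
  have dR: "distr M lborel R = density lborel pRd"
  proof -
    have pRd_eq: "pRd = (\<lambda>r. ennreal (indicator {0<..} r * pR r))"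
      by (simp add: fun_eq_iff pRd_def pR'_def)
    show ?thesis using distR unfolding pRd_eq distributed_def by simp
  qed
  have dV: "distr M ?\<sigma> V = density ?\<sigma> pVd"
  proof -
    have pVd_eq: "pVd = (\<lambda>v. ennreal (vMF_density \<mu>v \<tau> v))"
      by (simp add: fun_eq_iff pVd_def)
    show ?thesis using distV unfolding pVd_eq distributed_def by simp
  qed
  have RVm: "(\<lambda>\<omega>. (R \<omega>, V \<omega>)) \<in> M \<rightarrow>\<^sub>M lborel \<Otimes>\<^sub>M ?\<sigma>"
    using Rm Vm by (rule measurable_Pair)
  have sfR: "sigma_finite_measure (distr M lborel R)"
    by (rule prob_space_imp_sigma_finite[OF P.prob_space_distr[OF Rm]])
  have sfV: "sigma_finite_measure (distr M ?\<sigma> V)"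
    by (rule prob_space_imp_sigma_finite[OF P.prob_space_distr[OF Vm]])
  have prod: "distr M (lborel \<Otimes>\<^sub>M ?\<sigma>) (\<lambda>\<omega>. (R \<omega>, V \<omega>)) = density lborel pRd \<Otimes>\<^sub>M density ?\<sigma> pVd"
  proof -
    have "distr M lborel R \<Otimes>\<^sub>M distr M ?\<sigma> V = distr M (lborel \<Otimes>\<^sub>M ?\<sigma>) (\<lambda>\<omega>. (R \<omega>, V \<omega>))"
    proof (rule pair_measure_eqI)
      show "sigma_finite_measure (distr M lborel R)" by (rule sfR)
      show "sigma_finite_measure (distr M ?\<sigma> V)" by (rule sfV)
      have "sets (distr M lborel R \<Otimes>\<^sub>M distr M ?\<sigma> V) = sets (lborel \<Otimes>\<^sub>M ?\<sigma>)"
        by (rule sets_pair_measure_cong) simp_all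
      then show "sets (distr M lborel R \<Otimes>\<^sub>M distr M ?\<sigma> V) = sets (distr M (lborel \<Otimes>\<^sub>M ?\<sigma>) (\<lambda>\<omega>. (R \<omega>, V \<omega>)))"
        by simp
      fix A B assume "A \<in> sets (distr M lborel R)" "B \<in> sets (distr M ?\<sigma> V)"
      then have A: "A \<in> sets (borel :: real measure)" and B: "B \<in> sets (borel :: (real^'m) measure)" by auto
      have eA: "emeasure (distr M lborel R) A = ennreal (measure M {\<omega>\<in>space M. R \<omega> \<in> A})"
      proof -
        have "emeasure (distr M lborel R) A = emeasure M (R -` A \<inter> space M)"
          by (rule emeasure_distr[OF Rm]) (use A in simp)
        also have "R -` A \<inter> space M = {\<omega>\<in>space M. R \<omega> \<in> A}" by auto
        finally show ?thesis by (simp add: P.emeasure_eq_measure)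
      qed
      have eB: "emeasure (distr M ?\<sigma> V) B = ennreal (measure M {\<omega>\<in>space M. V \<omega> \<in> B})"
      proof -
        have "emeasure (distr M ?\<sigma> V) B = emeasure M (V -` B \<inter> space M)"
          by (rule emeasure_distr[OF Vm]) (use B in simp)
        also have "V -` B \<inter> space M = {\<omega>\<in>space M. V \<omega> \<in> B}" by auto
        finally show ?thesis by (simp add: P.emeasure_eq_measure)
      qed
      have eAB: "emeasure (distr M (lborel \<Otimes>\<^sub>M ?\<sigma>) (\<lambda>\<omega>. (R \<omega>, V \<omega>))) (A \<times> B) =
          ennreal (measure M ({\<omega>\<in>space M. R \<omega> \<in> A} \<inter> {\<omega>\<in>space M. V \<omega> \<in> B}))"
      proof -
        have "emeasure (distr M (lborel \<Otimes>\<^sub>M ?\<sigma>) (\<lambda>\<omega>. (R \<omega>, V \<omega>))) (A \<times> B) =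
            emeasure M ((\<lambda>\<omega>. (R \<omega>, V \<omega>)) -` (A \<times> B) \<inter> space M)"
          by (rule emeasure_distr[OF RVm]) (rule pair_measureI; use A B in simp)
        also have "(\<lambda>\<omega>. (R \<omega>, V \<omega>)) -` (A \<times> B) \<inter> space M = {\<omega>\<in>space M. R \<omega> \<in> A} \<inter> {\<omega>\<in>space M. V \<omega> \<in> B}"
          by auto
        finally show ?thesis by (simp add: P.emeasure_eq_measure)
      qed
      show "emeasure (distr M lborel R) A * emeasure (distr M ?\<sigma> V) B =
          emeasure (distr M (lborel \<Otimes>\<^sub>M ?\<sigma>) (\<lambda>\<omega>. (R \<omega>, V \<omega>))) (A \<times> B)"
        unfolding eA eB eAB using indep A B by (simp add: ennreal_mult[symmetric])
    qed
    then show ?thesis using dR dV by simp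
  qed
  have sLS: "sets (lborel \<Otimes>\<^sub>M ?\<sigma>) = sets (borel \<Otimes>\<^sub>M borel)"
    by (rule sets_pair_measure_cong) simp_all
  have "distr M lborel X = density lborel f"
  proof (rule measure_eqI)
    show "sets (distr M lborel X) = sets (density lborel f)" by simp
    fix B assume "B \<in> sets (distr M lborel X)"
    then have B[measurable]: "B \<in> sets borel" by simp
    define hh where "hh z = \<mu> + fst z *\<^sub>R (S *v snd z)" for z :: "real \<times> (real^'m)"
    have LHS: "emeasure (distr M lborel X) B =
       (\<integral>\<^sup>+r. (\<integral>\<^sup>+v. pRd r * pVd v * indicator B (hh (r, v)) \<partial>?\<sigma>) \<partial>lborel)"
    proof -
      have hb: "(\<lambda>z. indicator B (hh z) :: ennreal) \<in> borel_measurable (borel \<Otimes>\<^sub>M borel)"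
        unfolding hh_def by measurable
      have hb2: "(\<lambda>z. indicator B (hh z) :: ennreal) \<in> borel_measurable (lborel \<Otimes>\<^sub>M ?\<sigma>)"
        by (subst measurable_cong_sets[OF sLS refl]) (rule hb)
      have db: "(\<lambda>(r, v). pRd r * pVd v) \<in> borel_measurable (borel \<Otimes>\<^sub>M borel)"
        by measurable
      have db2: "(\<lambda>(r, v). pRd r * pVd v) \<in> borel_measurable (lborel \<Otimes>\<^sub>M ?\<sigma>)"
        by (subst measurable_cong_sets[OF sLS refl]) (rule db)
      have ib: "(\<lambda>z. (case z of (r, v) \<Rightarrow> pRd r * pVd v) * indicator B (hh z)) \<in> borel_measurable (lborel \<Otimes>\<^sub>M ?\<sigma>)"
      proof -
        have "(\<lambda>z. (case z of (r, v) \<Rightarrow> pRd r * pVd v) * indicator B (hh z) :: ennreal) \<in> borel_measurable (borel \<Otimes>\<^sub>M borel)"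
          unfolding hh_def by measurable
        then show ?thesis by (subst measurable_cong_sets[OF sLS refl])
      qed
      have "emeasure (distr M lborel X) B = (\<integral>\<^sup>+x. indicator B x \<partial>distr M lborel X)"
        by (rule nn_integral_indicator[symmetric]) simp
      also have "\<dots> = (\<integral>\<^sup>+\<omega>. indicator B (X \<omega>) \<partial>M)"
        by (rule nn_integral_distr[OF Xm]) simp
      also have "\<dots> = (\<integral>\<^sup>+\<omega>. indicator B (hh (R \<omega>, V \<omega>)) \<partial>M)"
        by (simp add: X_def hh_def)
      also have "\<dots> = (\<integral>\<^sup>+z. indicator B (hh z) \<partial>distr M (lborel \<Otimes>\<^sub>M ?\<sigma>) (\<lambda>\<omega>. (R \<omega>, V \<omega>)))"
        by (rule nn_integral_distr[OF RVm, symmetric]) (use hb2 in simp)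
      also have "\<dots> = (\<integral>\<^sup>+z. indicator B (hh z) \<partial>(density lborel pRd \<Otimes>\<^sub>M density ?\<sigma> pVd))"
        by (simp only: prod)
      also have "density lborel pRd \<Otimes>\<^sub>M density ?\<sigma> pVd = density (lborel \<Otimes>\<^sub>M ?\<sigma>) (\<lambda>(r, v). pRd r * pVd v)"
      proof (rule pair_measure_density)
        show "pRd \<in> borel_measurable lborel" by (simp add: measurable_lborel1)
        show "pVd \<in> borel_measurable ?\<sigma>"
          by (subst measurable_cong_sets[OF sets_sphere_surface refl]) (rule pVd_meas)
        show "sigma_finite_measure ?\<sigma>" by (rule sigma_finite_sphere)
        show "sigma_finite_measure (density ?\<sigma> pVd)" using sfV by (simp add: dV)
      qed
      also have "(\<integral>\<^sup>+z. indicator B (hh z) \<partial>density (lborel \<Otimes>\<^sub>M ?\<sigma>) (\<lambda>(r, v). pRd r * pVd v))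
          = (\<integral>\<^sup>+z. (case z of (r, v) \<Rightarrow> pRd r * pVd v) * indicator B (hh z) \<partial>(lborel \<Otimes>\<^sub>M ?\<sigma>))"
        by (rule nn_integral_density) (use db2 hb2 in simp_all)
      also have "\<dots> = (\<integral>\<^sup>+r. (\<integral>\<^sup>+v. pRd r * pVd v * indicator B (hh (r, v)) \<partial>?\<sigma>) \<partial>lborel)"
        using sigma_finite_measure.nn_integral_fst[OF sigma_finite_sphere ib] by simp
      finally show ?thesis .
    qed
    define k where "k y = ennreal \<bar>det S\<bar> * (f (\<mu> + S *v y) * indicator B (\<mu> + S *v y))" for y
    have k_meas[measurable]: "k \<in> borel_measurable borel" unfolding k_def[abs_def] by measurable
    have RHS: "emeasure (density lborel f) B =
       (\<integral>\<^sup>+r. rad_density m r * (\<integral>\<^sup>+v. k (r *\<^sub>R v) \<partial>?\<sigma>) \<partial>lborel)"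
    proof -
      have "emeasure (density lborel f) B = (\<integral>\<^sup>+x. f x * indicator B x \<partial>lborel)"
        by (rule emeasure_density) simp_all
      also have "\<dots> = (\<integral>\<^sup>+y. ennreal \<bar>det S\<bar> * (f (\<mu> + S *v y) * indicator B (\<mu> + S *v y)) \<partial>lborel)"
        by (rule affine_nn_integral[OF invS]) measurable
      also have "\<dots> = (\<integral>\<^sup>+y. k y \<partial>lborel)" by (simp add: k_def)
      also have "\<dots> = (\<integral>\<^sup>+r. rad_density m r * (\<integral>\<^sup>+v. k (r *\<^sub>R v) \<partial>?\<sigma>) \<partial>lborel)"
        unfolding m_def by (rule polar_nn_integral[OF k_meas])
      finally show ?thesis .
    qed
    have inner: "(\<integral>\<^sup>+v. pRd r * pVd v * indicator B (hh (r, v)) \<partial>?\<sigma>) =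
        rad_density m r * (\<integral>\<^sup>+v. k (r *\<^sub>R v) \<partial>?\<sigma>)" for r
    proof (cases "r > 0")
      case False
      then show ?thesis by (simp add: pRd_def pR'_def rad_density_def)
    next
      case True
      have kvm: "(\<lambda>v. k (r *\<^sub>R v)) \<in> borel_measurable ?\<sigma>"
        by (subst measurable_cong_sets[OF sets_sphere_surface refl]) measurable
      have pt: "pRd r * pVd v * indicator B (hh (r, v)) = rad_density m r * k (r *\<^sub>R v)"
        if v: "v \<in> sphere 0 1" for v :: "real^'m"
      proof -
        have nv: "norm v = 1" using v by simp
        have Sv: "S *v (r *\<^sub>R v) = r *\<^sub>R (S *v v)" by (simp add: matrix_vector_mult_scaleR)
        have w: "Si *v (S *v (r *\<^sub>R v)) = r *\<^sub>R v" by (simp add: matrix_vector_mul_assoc SiS)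
        have rv0: "r *\<^sub>R v \<noteq> 0" using True nv by auto
        have p_ne: "\<mu> + S *v (r *\<^sub>R v) \<noteq> \<mu>"
        proof
          assume "\<mu> + S *v (r *\<^sub>R v) = \<mu>"
          then have "S *v (r *\<^sub>R v) = 0" by simp
          then have "Si *v (S *v (r *\<^sub>R v)) = 0" by simp
          with w rv0 show False by simp
        qed
        have nrv: "norm (r *\<^sub>R v) = r" using True nv by simp
        have sc: "(1 / r) *\<^sub>R (r *\<^sub>R v) = v" using True by simp
        have Fp: "F (\<mu> + S *v (r *\<^sub>R v)) = 1 / \<bar>det S\<bar> * vMF_density \<mu>v \<tau> v
                 * ((r ^ 2) powr (- (real m - 1) / 2) * pR' r)"
        proof -
          have "F (\<mu> + S *v (r *\<^sub>R v)) = G (Si *v (\<mu> + S *v (r *\<^sub>R v) - \<mu>))" by (rule F_alt[OF p_ne])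
          also have "\<mu> + S *v (r *\<^sub>R v) - \<mu> = S *v (r *\<^sub>R v)" by simp
          also note w
          finally show ?thesis unfolding G_def by (simp only: nrv sc)
        qed
        have pw: "r ^ (m - 1) * (r ^ 2) powr (- (real m - 1) / 2) = 1"
        proof -
          have "(r ^ 2) powr (- (real m - 1) / 2) = (r powr 2) powr (- (real m - 1) / 2)"
            using True by (simp add: powr_numeral)
          also have "\<dots> = r powr (2 * (- (real m - 1) / 2))" by (rule powr_powr)
          also have "2 * (- (real m - 1) / 2) = - (real m - 1)" by simp
          finally have a: "(r ^ 2) powr (- (real m - 1) / 2) = r powr (- (real m - 1))" .
          have b: "r ^ (m - 1) = r powr (real m - 1)"
            using True m1 by (simp add: powr_realpow[symmetric] of_nat_diff)
          show ?thesis unfolding a b using True by (simp add: powr_add[symmetric])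
        qed
        have real_id: "r ^ (m - 1) * (\<bar>det S\<bar> * F (\<mu> + S *v (r *\<^sub>R v))) = pR' r * vMF_density \<mu>v \<tau> v"
        proof -
          have "r ^ (m - 1) * (\<bar>det S\<bar> * F (\<mu> + S *v (r *\<^sub>R v)))
              = (\<bar>det S\<bar> * (1 / \<bar>det S\<bar>)) * (r ^ (m - 1) * (r ^ 2) powr (- (real m - 1) / 2)) * (pR' r * vMF_density \<mu>v \<tau> v)"
            unfolding Fp by (simp add: algebra_simps)
          also have "\<dots> = pR' r * vMF_density \<mu>v \<tau> v" using detS pw by simp
          finally show ?thesis .
        qed
        have hh_eq: "hh (r, v) = \<mu> + S *v (r *\<^sub>R v)" by (simp add: hh_def Sv)
        have rad: "rad_density m r = ennreal (r ^ (m - 1))" using True by (simp add: rad_density_def)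
        have "rad_density m r * k (r *\<^sub>R v) =
            ennreal (r ^ (m - 1)) * (ennreal \<bar>det S\<bar> * ennreal (F (\<mu> + S *v (r *\<^sub>R v)))) * indicator B (hh (r, v))"
          unfolding rad k_def f_def hh_eq by (simp add: mult.assoc)
        also have "\<dots> = ennreal (r ^ (m - 1) * (\<bar>det S\<bar> * F (\<mu> + S *v (r *\<^sub>R v)))) * indicator B (hh (r, v))"
          using True by (simp add: ennreal_mult')
        also have "\<dots> = ennreal (pR' r * vMF_density \<mu>v \<tau> v) * indicator B (hh (r, v))"
          unfolding real_id ..
        also have "\<dots> = pRd r * pVd v * indicator B (hh (r, v))"
          using pR'0 by (simp add: pRd_def pVd_def ennreal_mult')
        finally show ?thesis ..
      qed
      have "rad_density m r * (\<integral>\<^sup>+v. k (r *\<^sub>R v) \<partial>?\<sigma>) = (\<integral>\<^sup>+v. rad_density m r * k (r *\<^sub>R v) \<partial>?\<sigma>)"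
        by (rule nn_integral_cmult[symmetric]) (rule kvm)
      also have "\<dots> = (\<integral>\<^sup>+v. pRd r * pVd v * indicator B (hh (r, v)) \<partial>?\<sigma>)"
        by (rule nn_integral_cong_AE) (use AE_sphere_surface pt in \<open>auto elim!: AE_mp\<close>)
      finally show ?thesis ..
    qed
    show "emeasure (distr M lborel X) B = emeasure (density lborel f) B"
      unfolding LHS RHS inner ..
  qed
  then have distX: "distributed M lborel X f"
    unfolding distributed_def using Xm by (simp add: measurable_lborel1)
  show ?thesis
  proof (intro exI[of _ f] conjI allI impI)
    show "distributed M lborel (\<lambda>\<omega>. \<mu> + R \<omega> *\<^sub>R (S *v V \<omega>)) f"
      using distX by (simp add: X_def[abs_def])
    fix x :: "real^'m" assume "x \<noteq> \<mu>"
    show "let t = (x - \<mu>) \<bullet> (matrix_inv \<Sigma> *v (x - \<mu>)) in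
         f x = ennreal (det \<Sigma> powr (-1/2)
                 * vMF_density \<mu>v \<tau> ((1 / sqrt t) *\<^sub>R (matrix_inv S *v (x - \<mu>)))
                 * (t powr (- (real CARD('m) - 1) / 2) * pR (sqrt t)))"
      by (simp add: f_def F_def t_def Let_def)
  qed
qed


end
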